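(* Let $1\leq r\leq n$, give the variables $x_1,\dots,x_n$ of $\mathbb{C}^n$ the weights $(w_1,\dots,w_r,0,\dots,0)$ with $w_1,\dots,w_r>0$, and let $f\in \mathbb{C}\{x_{r+1},\dots,x_n\}[x_1,\dots,x_r]$ be a quasihomogeneous polynomial of strictly positive weight $\mathrm{wt}(f)>0$. Then for every integer $p>0$ and every non-zero quasihomogeneous logarithmic $p$-form $\omega$ (logarithmic with respect to $f$), one has $\mathrm{wt}(\omega)>-\mathrm{wt}(f)$.
   Context: Weights: an element $g\in \mathbb{C}\{x_{r+1},\dots,x_n\}[x_1,\dots,x_r]$ is quasihomogeneous of weight $d$ if it is a sum of terms $c(x_{r+1},\dots,x_n)\,x_1^{a_1}\cdots x_r^{a_r}$ with $\sum_{i=1}^r a_iw_i=d$; the variables $x_{r+1},\dots,x_n$ have weight $0$. We set $\mathrm{wt}(dx_i)=w_i$ for $i\le r$ and $\mathrm{wt}(dx_i)=0$ for $i>r$; a holomorphic $p$-form $\sum_I g_I\,dx_{i_1}\wedge\cdots\wedge dx_{i_p}$ is quasihomogeneous of weight $d$ if each $g_I$ is quasihomogeneous and $\mathrm{wt}(g_I)+\sum_{k}\mathrm{wt}(dx_{i_k})=d$ for all nonzero terms. A germ at $0$ of meromorphic $p$-form $\omega$ is logarithmic (with respect to $f$) if $f\omega$ and $f\,d\omega$ are holomorphic; it is quasihomogeneous if the holomorphic form $f\omega$ is quasihomogeneous, and then $\mathrm{wt}(\omega):=\mathrm{wt}(f\omega)-\mathrm{wt}(f)$. *)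

theory Defs
  imports "HOL-Analysis.Analysis"
begin

text \<open>A weight function w :: 'n => real assigns w i > 0 to the weighted variables
  x_1..x_r and w i = 0 to x_{r+1}..x_n.  Germs at 0 are represented by
  functions, equalities of germs hold eventually in nhds 0.\<close>

definition holo_on :: "(complex^'n) set \<Rightarrow> (complex^'n \<Rightarrow> complex) \<Rightarrow> bool" where
  "holo_on U g \<longleftrightarrow> (\<forall>z\<in>U. \<exists>L. (g has_derivative L) (at z) \<and> (\<forall>c v. L (c *s v) = c * L v))"

definition holo_germ :: "(complex^'n \<Rightarrow> complex) \<Rightarrow> bool" where
  "holo_germ g \<longleftrightarrow> (\<exists>U. open U \<and> 0 \<in> U \<and> holo_on U g)"

text \<open>Elements of C{x_{r+1},...,x_n}: holomorphic germs depending only on the weight-0 variables.\<close>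
definition wt0_fun :: "('n \<Rightarrow> real) \<Rightarrow> (complex^'n \<Rightarrow> complex) \<Rightarrow> bool" where
  "wt0_fun w c \<longleftrightarrow> holo_germ c \<and> (\<forall>x y. (\<forall>i. w i = 0 \<longrightarrow> x$i = y$i) \<longrightarrow> c x = c y)"

definition qh :: "('n::finite \<Rightarrow> real) \<Rightarrow> real \<Rightarrow> (complex^'n \<Rightarrow> complex) \<Rightarrow> bool" where
  "qh w d g \<longleftrightarrow> (\<exists>A c. finite A \<and>
     (\<forall>a\<in>A. (\<forall>i. w i = 0 \<longrightarrow> a i = (0::nat)) \<and> (\<Sum>i\<in>UNIV. real (a i) * w i) = d \<and> wt0_fun w (c a)) \<and>
     (\<forall>\<^sub>F x in nhds 0. g x = (\<Sum>a\<in>A. c a x * (\<Prod>i\<in>UNIV. (x$i) ^ (a i)))))"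

text \<open>p-forms are given by alternating coefficient functions on index lists of length p:
  omega = (1/p!) sum_{i_1..i_p} omega_{i_1..i_p} dx_{i_1} ^ ... ^ dx_{i_p}.\<close>
definition alternating :: "nat \<Rightarrow> ('n list \<Rightarrow> complex^'n \<Rightarrow> complex) \<Rightarrow> bool" where
  "alternating p \<eta> \<longleftrightarrow> (\<forall>js i j. length js = p \<and> i < j \<and> j < p \<longrightarrow>
      \<eta> (js[i := js!j, j := js!i]) = (\<lambda>x. - \<eta> js x))"

definition holo_form :: "nat \<Rightarrow> ('n list \<Rightarrow> complex^'n \<Rightarrow> complex) \<Rightarrow> bool" where
  "holo_form p \<eta> \<longleftrightarrow> alternating p \<eta> \<and> (\<forall>js. length js = p \<longrightarrow> holo_germ (\<eta> js))"

definition qh_form :: "('n::finite \<Rightarrow> real) \<Rightarrow> nat \<Rightarrow> real \<Rightarrow> ('n list \<Rightarrow> complex^'n \<Rightarrow> complex) \<Rightarrow> bool" where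
  "qh_form w p d \<eta> \<longleftrightarrow> (\<forall>js. length js = p \<longrightarrow> qh w (d - sum_list (map w js)) (\<eta> js))"

definition pd :: "'n::finite \<Rightarrow> (complex^'n \<Rightarrow> complex) \<Rightarrow> complex^'n \<Rightarrow> complex" where
  "pd i g x = deriv (\<lambda>t. g (x + t *s axis i 1)) 0"

definition ext_d :: "('n::finite list \<Rightarrow> complex^'n \<Rightarrow> complex) \<Rightarrow> 'n list \<Rightarrow> complex^'n \<Rightarrow> complex" where
  "ext_d \<omega> js x = (\<Sum>k<length js. (-1)^k * pd (js!k) (\<omega> (take k js @ drop (Suc k) js)) x)"

definition f_times_eq :: "(complex^'n \<Rightarrow> complex) \<Rightarrow> nat \<Rightarrow> ('n list \<Rightarrow> complex^'n \<Rightarrow> complex)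
    \<Rightarrow> ('n list \<Rightarrow> complex^'n \<Rightarrow> complex) \<Rightarrow> bool" where
  "f_times_eq f p \<omega> \<eta> \<longleftrightarrow> (\<forall>\<^sub>F x in nhds 0. f x \<noteq> 0 \<longrightarrow> (\<forall>js. length js = p \<longrightarrow> f x * \<omega> js x = \<eta> js x))"

definition log_form :: "(complex^'n::finite \<Rightarrow> complex) \<Rightarrow> nat \<Rightarrow> ('n list \<Rightarrow> complex^'n \<Rightarrow> complex) \<Rightarrow> bool" where
  "log_form f p \<omega> \<longleftrightarrow> (\<exists>\<eta>. holo_form p \<eta> \<and> f_times_eq f p \<omega> \<eta>) \<and>
     (\<exists>\<theta>. holo_form (Suc p) \<theta> \<and> f_times_eq f (Suc p) (ext_d \<omega>) \<theta>)"

text \<open>Quasihomogeneous meromorphic form of weight e, where wt(omega) = wt(f omega) - wt(f) and wt f = df.\<close>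
definition qh_mero :: "('n::finite \<Rightarrow> real) \<Rightarrow> (complex^'n \<Rightarrow> complex) \<Rightarrow> real \<Rightarrow> nat \<Rightarrow> real
    \<Rightarrow> ('n list \<Rightarrow> complex^'n \<Rightarrow> complex) \<Rightarrow> bool" where
  "qh_mero w f df p e \<omega> \<longleftrightarrow> (\<exists>\<eta>. holo_form p \<eta> \<and> f_times_eq f p \<omega> \<eta> \<and> qh_form w p (e + df) \<eta>)"

definition nonzero_mero :: "(complex^'n \<Rightarrow> complex) \<Rightarrow> nat \<Rightarrow> ('n list \<Rightarrow> complex^'n \<Rightarrow> complex) \<Rightarrow> bool" where
  "nonzero_mero f p \<omega> \<longleftrightarrow> \<not> (\<forall>js. length js = p \<longrightarrow> (\<forall>\<^sub>F x in nhds 0. f x \<noteq> 0 \<longrightarrow> \<omega> js x = 0))"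

end

theory Submission imports Defs "HOL-Computational_Algebra.Polynomial" begin

lemma cont_line: "isCont (\<lambda>t::complex. x + t *s (v::complex^'n::finite)) t0"
  unfolding isCont_def vector_scalar_mult_def
  by (intro tendsto_intros)

lemma ev_open_cont: "isCont h a \<Longrightarrow> open S \<Longrightarrow> h a \<in> S \<Longrightarrow> eventually (\<lambda>x. h x \<in> S) (nhds a)"
  unfolding eventually_nhds_conv_at isCont_def tendsto_def by auto

lemma deriv_zero_ev:
  assumes "eventually (\<lambda>t. (h::complex\<Rightarrow>complex) t = 0) (nhds 0)" shows "deriv h 0 = 0"
proof -
  have "DERIV h 0 :> 0" using DERIV_cong_ev[of 0 0 h "\<lambda>_. 0" 0 0] assms by simp
  then show ?thesis by (rule DERIV_imp_deriv)
qed

lemma qh_neg: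
  assumes "\<forall>i. w i \<ge> 0" "qh w d g" "d < 0"
  shows "\<forall>\<^sub>F x in nhds 0. g x = 0"
proof -
  obtain A c where A: "finite A"
    "\<forall>a\<in>A. (\<forall>i. w i = 0 \<longrightarrow> a i = (0::nat)) \<and> (\<Sum>i\<in>UNIV. real (a i) * w i) = d \<and> wt0_fun w (c a)"
    "\<forall>\<^sub>F x in nhds 0. g x = (\<Sum>a\<in>A. c a x * (\<Prod>i\<in>UNIV. (x$i) ^ (a i)))"
    using assms(2) unfolding qh_def by blast
  have "A = {}"
  proof (rule ccontr)
    assume "A \<noteq> {}" then obtain a where "a \<in> A" by auto
    have "(\<Sum>i\<in>UNIV. real (a i) * w i) \<ge> 0" using assms(1) by (intro sum_nonneg) auto
    then show False using A(2) \<open>a\<in>A\<close> assms(3) by auto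
  qed
  then show ?thesis using A(3) by simp
qed

lemma qh_zero:
  assumes "\<forall>i. w i \<ge> 0" "qh w 0 g"
  shows "\<exists>C. (\<forall>x y. (\<forall>i. w i = 0 \<longrightarrow> x$i = y$i) \<longrightarrow> C x = C y) \<and> (\<forall>\<^sub>F x in nhds 0. g x = C x)"
proof -
  obtain A c where A: "finite A"
    "\<forall>a\<in>A. (\<forall>i. w i = 0 \<longrightarrow> a i = (0::nat)) \<and> (\<Sum>i\<in>UNIV. real (a i) * w i) = 0 \<and> wt0_fun w (c a)"
    "\<forall>\<^sub>F x in nhds 0. g x = (\<Sum>a\<in>A. c a x * (\<Prod>i\<in>UNIV. (x$i) ^ (a i)))"
    using assms(2) unfolding qh_def by blast
  have a0: "a i = 0" if "a \<in> A" for a i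
  proof -
    have "\<forall>i\<in>UNIV. real (a i) * w i = 0"
      using A(2) that assms(1) by (subst sum_nonneg_eq_0_iff[symmetric]) auto
    then have "real (a i) * w i = 0" by auto
    then show ?thesis using A(2) that by auto
  qed
  define C where "C x = (\<Sum>a\<in>A. c a x)" for x
  have "\<forall>x y. (\<forall>i. w i = 0 \<longrightarrow> x$i = y$i) \<longrightarrow> C x = C y"
    using A(2) unfolding C_def wt0_fun_def by (auto intro!: sum.cong)
  moreover have "\<forall>\<^sub>F x in nhds 0. g x = C x"
    using A(3) by eventually_elim (simp add: C_def a0)
  ultimately show ?thesis by blast
qed


lemma holo_germ_cont: "holo_germ g \<Longrightarrow> \<forall>\<^sub>F x in nhds 0. isCont g x"
  unfolding holo_germ_def holo_on_def eventually_nhds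
  by (metis has_derivative_continuous)

lemma sl_nn: "\<forall>i. w i \<ge> (0::real) \<Longrightarrow> sum_list (map w L) \<ge> 0"
  by (induction L) auto

theorem mainTheorem2:
  fixes w :: "'n::finite \<Rightarrow> real" and f :: "complex^'n \<Rightarrow> complex" and df :: real
    and p :: nat and \<omega> :: "'n list \<Rightarrow> complex^'n \<Rightarrow> complex" and e :: real
  assumes "\<forall>i. w i \<ge> 0" and "\<exists>i. w i > 0"
    and "qh w df f" and "df > 0" and "\<not> (\<forall>\<^sub>F x in nhds 0. f x = 0)"
    and "p > 0" and "log_form f p \<omega>" and "nonzero_mero f p \<omega>" and "qh_mero w f df p e \<omega>"
  shows "e > - df"
proof (rule ccontr)
  assume "\<not> e > - df"
  then have dle: "e + df \<le> 0" by simp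
  have wnn: "\<forall>i. w i \<ge> 0" using assms(1) .
  obtain \<eta> where eta: "holo_form p \<eta>" "f_times_eq f p \<omega> \<eta>" "qh_form w p (e+df) \<eta>"
    using assms(9) unfolding qh_mero_def by blast
  obtain \<theta> where th: "holo_form (Suc p) \<theta>" "f_times_eq f (Suc p) (ext_d \<omega>) \<theta>"
    using assms(7) unfolding log_form_def by blast
  obtain js0 where js0: "length js0 = p" "\<not> (\<forall>\<^sub>F x in nhds 0. f x \<noteq> 0 \<longrightarrow> \<omega> js0 x = 0)"
    using assms(8) unfolding nonzero_mero_def by blast
  have qeta: "qh w (e + df - sum_list (map w L)) (\<eta> L)" if "length L = p" for L
    using eta(3) that unfolding qh_form_def by blast
  have ev_ft: "\<forall>\<^sub>F x in nhds 0. f x \<noteq> 0 \<longrightarrow> (\<forall>js. length js = p \<longrightarrow> f x * \<omega> js x = \<eta> js x)"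
    using eta(2) unfolding f_times_eq_def .
  have ev_ft2: "\<forall>\<^sub>F x in nhds 0. f x \<noteq> 0 \<longrightarrow> (\<forall>js. length js = Suc p \<longrightarrow> f x * ext_d \<omega> js x = \<theta> js x)"
    using th(2) unfolding f_times_eq_def .
  have s0: "e + df - sum_list (map w js0) = 0"
  proof (rule ccontr)
    assume "e + df - sum_list (map w js0) \<noteq> 0"
    then have "e + df - sum_list (map w js0) < 0" using dle sl_nn[OF wnn, of js0] by linarith
    then have "\<forall>\<^sub>F x in nhds 0. \<eta> js0 x = 0" using qh_neg[OF wnn qeta[OF js0(1)]] by blast
    then have "\<forall>\<^sub>F x in nhds 0. f x \<noteq> 0 \<longrightarrow> \<omega> js0 x = 0" using ev_ft
      by eventually_elim (use js0(1) in auto)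
    with js0(2) show False by blast
  qed
  have "qh w 0 (\<eta> js0)" using qeta[OF js0(1)] s0 by simp
  then obtain C where Cinv: "\<forall>x y. (\<forall>i. w i = 0 \<longrightarrow> x$i = y$i) \<longrightarrow> C x = C y"
    and Cev: "\<forall>\<^sub>F x in nhds 0. \<eta> js0 x = C x"
    using qh_zero[OF wnn] by blast
  have d0: "e + df = 0" using s0 dle sl_nn[OF wnn, of js0] by linarith
  define LS where "LS = {L. length L = p \<and> 0 < sum_list (map w L)}"
  have LSfin: "finite LS"
    by (rule finite_subset[OF _ finite_lists_length_eq[of "UNIV::'n set" p]]) (auto simp: LS_def)
  have ev_L: "\<forall>\<^sub>F x in nhds 0. \<forall>L\<in>LS. \<eta> L x = 0"
  proof (rule eventually_ball_finite[OF LSfin], rule ballI)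
    fix L assume "L \<in> LS"
    then have "length L = p" "e + df - sum_list (map w L) < 0" using d0 by (auto simp: LS_def)
    then show "\<forall>\<^sub>F x in nhds 0. \<eta> L x = 0" using qh_neg[OF wnn qeta] by blast
  qed
  obtain Af cf where Af: "finite Af"
    "\<forall>a\<in>Af. (\<forall>i. w i = 0 \<longrightarrow> a i = (0::nat)) \<and> (\<Sum>i\<in>UNIV. real (a i) * w i) = df \<and> wt0_fun w (cf a)"
    "\<forall>\<^sub>F x in nhds 0. f x = (\<Sum>a\<in>Af. cf a x * (\<Prod>i\<in>UNIV. (x$i) ^ (a i)))"
    using assms(3) unfolding qh_def by blast
  define F where "F = (\<lambda>x. \<Sum>a\<in>Af. cf a x * (\<Prod>i\<in>UNIV. (x$i) ^ (a i)))"
  have ev_Fc: "\<forall>\<^sub>F x in nhds 0. isCont F x"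
  proof -
    have "\<forall>\<^sub>F x in nhds 0. \<forall>a\<in>Af. isCont (cf a) x"
      by (rule eventually_ball_finite[OF Af(1)]) (use Af(2) holo_germ_cont wt0_fun_def in blast)
    then show ?thesis unfolding F_def
      by eventually_elim (intro continuous_intros, auto)
  qed
  have ev_th: "\<forall>\<^sub>F x in nhds 0. \<forall>j. isCont (\<theta> (j # js0)) x"
  proof (rule eventually_all_finite)
    fix j
    have "holo_germ (\<theta> (j # js0))" using th(1) js0(1) unfolding holo_form_def by auto
    then show "\<forall>\<^sub>F x in nhds 0. isCont (\<theta> (j # js0)) x" by (rule holo_germ_cont)
  qed
  define Pr where "Pr x \<longleftrightarrow> f x = F x \<and> isCont F x \<and>
     (f x \<noteq> 0 \<longrightarrow> (\<forall>js. length js = p \<longrightarrow> f x * \<omega> js x = \<eta> js x)) \<and>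
     (f x \<noteq> 0 \<longrightarrow> (\<forall>js. length js = Suc p \<longrightarrow> f x * ext_d \<omega> js x = \<theta> js x)) \<and>
     \<eta> js0 x = C x \<and> (\<forall>L\<in>LS. \<eta> L x = 0) \<and> (\<forall>j. isCont (\<theta> (j # js0)) x)" for x
  have Af3: "\<forall>\<^sub>F x in nhds 0. f x = F x" using Af(3) unfolding F_def .
  have "\<forall>\<^sub>F x in nhds 0. Pr x" using Af3 ev_Fc ev_ft ev_ft2 Cev ev_L ev_th
    unfolding Pr_def by eventually_elim blast
  then obtain R where R: "R > 0" "\<And>x. x \<in> ball 0 R \<Longrightarrow> Pr x"
    unfolding eventually_nhds_metric by (auto simp: dist_commute)
  obtain y where y: "y \<in> ball 0 R" "f y \<noteq> 0" "\<omega> js0 y \<noteq> 0"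
  proof -
    have "\<not> (\<forall>x\<in>ball 0 R. f x \<noteq> 0 \<longrightarrow> \<omega> js0 x = 0)"
    proof
      assume "\<forall>x\<in>ball 0 R. f x \<noteq> 0 \<longrightarrow> \<omega> js0 x = 0"
      then have "\<forall>\<^sub>F x in nhds 0. f x \<noteq> 0 \<longrightarrow> \<omega> js0 x = 0"
        unfolding eventually_nhds by (intro exI[of _ "ball 0 R"]) (auto simp: R(1))
      with js0(2) show False by blast
    qed
    then show ?thesis using that by blast
  qed
  have Cy: "C y \<noteq> 0"
  proof -
    have "f y * \<omega> js0 y = C y" using R(2)[OF y(1)] y(2) js0(1) unfolding Pr_def by auto
    then show ?thesis using y by auto
  qed
  have fF: "f x = F x" if "x \<in> ball 0 R" for x using R(2)[OF that] unfolding Pr_def by blast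
  define W where "W = {i. w i > 0}"
  define zr where "zr S = (\<chi> j. if j \<in> S then 0 else y$j)" for S :: "'n set"
  have zr_ball: "zr S \<in> ball 0 R" for S
  proof -
    have "norm (zr S) \<le> norm y" by (rule norm_le_componentwise_cart) (auto simp: zr_def)
    then show ?thesis using y(1) by auto
  qed
  have zrC: "C (zr S) = C y" if "S \<subseteq> W" for S
  proof -
    have "\<forall>j. w j = 0 \<longrightarrow> zr S $ j = y $ j" using that by (auto simp: zr_def W_def)
    then show ?thesis using Cinv by blast
  qed
  have FW: "F (zr W) = 0"
    unfolding F_def
  proof (rule sum.neutral, rule ballI)
    fix a assume a: "a \<in> Af"
    have "\<exists>i. real (a i) * w i > 0"
    proof (rule ccontr)
      assume "\<not> ?thesis"
      then have "(\<Sum>i\<in>UNIV. real (a i) * w i) \<le> 0" by (intro sum_nonpos) (auto simp: not_less)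
      then show False using Af(2) a assms(4) by auto
    qed
    then obtain i where i: "real (a i) * w i > 0" by blast
    then have "a i > 0" "w i > 0" using wnn by (auto simp: zero_less_mult_iff)
    then have "(zr W $ i) ^ a i = 0" by (simp add: zr_def W_def)
    then have "(\<Prod>i\<in>UNIV. (zr W $ i) ^ a i) = 0" by (intro prod_zero) auto
    then show "cf a (zr W) * (\<Prod>i\<in>UNIV. zr W $ i ^ a i) = 0" by simp
  qed
  have zr0: "zr {} = y" by (simp add: zr_def vec_eq_iff)
  have F0: "F (zr {}) \<noteq> 0" using fF[OF y(1)] y(2) zr0 by simp
  define Ss where "Ss = {S. S \<subseteq> W \<and> F (zr S) \<noteq> 0}"
  have Ssfin: "finite Ss" unfolding Ss_def by (rule finite_subset[of _ "Pow UNIV"]) auto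
  have "{} \<in> Ss" using F0 by (simp add: Ss_def)
  then have "Max (card ` Ss) \<in> card ` Ss" using Ssfin by (intro Max_in) auto
  then obtain S where S: "S \<in> Ss" "card S = Max (card ` Ss)" by auto
  have Smax: "F (zr (insert i S)) = 0" if "i \<in> W - S" for i
  proof (rule ccontr)
    assume "F (zr (insert i S)) \<noteq> 0"
    then have "insert i S \<in> Ss" using that S(1) by (auto simp: Ss_def)
    then have "card (insert i S) \<le> card S" using S(2) Ssfin by simp
    moreover have "card (insert i S) = Suc (card S)" using that by simp
    ultimately show False by simp
  qed
  have "S \<noteq> W" using S(1) FW by (auto simp: Ss_def)
  then obtain i where i: "i \<in> W" "i \<notin> S" using S(1) by (auto simp: Ss_def)
  define u where "u = zr (insert i S)"
  have wi: "w i > 0" using i by (simp add: W_def)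
  have ui: "u$i = 0" by (simp add: u_def zr_def)
  have Cu: "C u = C y" unfolding u_def using S(1) i by (intro zrC) (auto simp: Ss_def)
  have zS: "zr S = u + (y$i) *s axis i 1"
    using i(2) by (auto simp: vec_eq_iff zr_def u_def axis_def)
  have Fu: "F u = 0" unfolding u_def using i by (intro Smax) auto
  have FzS: "F (zr S) \<noteq> 0" using S(1) by (simp add: Ss_def)
  have uball: "u \<in> ball 0 R" unfolding u_def by (rule zr_ball)
  define Pp where "Pp = (\<Sum>a\<in>Af. monom (cf a u * (\<Prod>j\<in>UNIV-{i}. (u$j)^(a j))) (a i))"
  have FP: "F (u + t *s axis i 1) = poly Pp t" for t
  proof -
    have c: "cf a (u + t *s axis i 1) = cf a u" if "a \<in> Af" for a
    proof -
      have "wt0_fun w (cf a)" using Af(2) that by blast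
      moreover have "\<forall>j. w j = 0 \<longrightarrow> (u + t *s axis i 1)$j = u$j" using wi by (auto simp: axis_def)
      ultimately show ?thesis unfolding wt0_fun_def by blast
    qed
    have pr: "(\<Prod>j\<in>UNIV. ((u + t *s axis i 1)$j) ^ a j) = t^(a i) * (\<Prod>j\<in>UNIV-{i}. (u$j)^(a j))" for a :: "'n \<Rightarrow> nat"
    proof -
      have "(\<Prod>j\<in>UNIV. ((u + t *s axis i 1)$j) ^ a j) = ((u + t *s axis i 1)$i) ^ a i * (\<Prod>j\<in>UNIV-{i}. ((u + t *s axis i 1)$j) ^ a j)"
        by (rule prod.remove) auto
      also have "\<dots> = t^(a i) * (\<Prod>j\<in>UNIV-{i}. (u$j)^(a j))"
        using ui by (auto simp: axis_def intro!: prod.cong)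
      finally show ?thesis .
    qed
    show ?thesis unfolding F_def Pp_def poly_sum poly_monom
    proof (rule sum.cong[OF refl])
      fix a assume a: "a \<in> Af"
      show "cf a (u + t *s axis i 1) * (\<Prod>j\<in>UNIV. (u + t *s axis i 1) $ j ^ a j) =
          cf a u * (\<Prod>j\<in>UNIV - {i}. u $ j ^ a j) * t ^ a i"
        unfolding c[OF a] pr by (simp only: mult_ac)
    qed
  qed
  have Pp0: "Pp \<noteq> 0" using FP[of "y$i"] FzS zS by auto
  have PpR: "poly Pp 0 = 0" using FP[of 0] Fu by simp
  define k where "k = order 0 Pp"
  have k0: "k \<noteq> 0" using PpR Pp0 order_root[of Pp 0] by (simp add: k_def)
  obtain Q where Q: "Pp = [:-0,1:]^k * Q" "\<not> [:-0,1:] dvd Q"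
    using order_decomp[OF Pp0, of 0] unfolding k_def by blast
  have Q0: "poly Q 0 \<noteq> 0" using Q(2) poly_eq_0_iff_dvd[of Q 0] by simp
  have PQ: "poly Pp t = t^k * poly Q t" for t by (subst Q(1)) (simp add: poly_power)
  define G' where "G' t = of_nat k * t^(k-1) * poly Q t + t^k * poly (pderiv Q) t" for t
  have dG: "DERIV (\<lambda>s. s^k * poly Q s) t :> G' t" for t
    unfolding G'_def by (auto intro!: derivative_eq_intros poly_DERIV)
  have near: "\<forall>\<^sub>F \<tau> in nhds 0. x + \<tau> *s axis j 1 \<in> ball 0 R \<and> F (x + \<tau> *s axis j 1) \<noteq> 0"
    if x: "x \<in> ball 0 R" "F x \<noteq> 0" for x j
  proof -
    have c1: "isCont (\<lambda>\<tau>. x + \<tau> *s axis j 1) 0" by (rule cont_line)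
    have "isCont F x" using R(2)[OF x(1)] unfolding Pr_def by blast
    then have c2: "isCont (\<lambda>\<tau>. F (x + \<tau> *s axis j 1)) 0"
      using isCont_o2[OF c1, of F] by simp
    have "x + 0 *s axis j 1 \<in> ball 0 R" using x by simp
    from ev_open_cont[OF c1 open_ball this]
    have "\<forall>\<^sub>F \<tau> in nhds 0. x + \<tau> *s axis j 1 \<in> ball 0 R" .
    moreover have "F (x + 0 *s axis j 1) \<in> -{0}" using x by simp
    from ev_open_cont[OF c2 open_Compl[OF closed_singleton] this]
    have "\<forall>\<^sub>F \<tau> in nhds 0. F (x + \<tau> *s axis j 1) \<in> -{0}" by simp
    ultimately show ?thesis by eventually_elim auto
  qed
  have ext0: "pd (js0!m) (\<omega> (i # (take m js0 @ drop (Suc m) js0))) x = 0"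
    if x: "x \<in> ball 0 R" "F x \<noteq> 0" and m: "m < p" for x m
  proof -
    define L where "L = i # (take m js0 @ drop (Suc m) js0)"
    have "length L = p" using m js0(1) by (auto simp: L_def)
    moreover have "sum_list (map w L) > 0" using wi sl_nn[OF wnn, of "take m js0 @ drop (Suc m) js0"]
      by (simp add: L_def)
    ultimately have LLS: "L \<in> LS" by (simp add: LS_def)
    show ?thesis unfolding pd_def L_def[symmetric]
    proof (rule deriv_zero_ev)
      show "\<forall>\<^sub>F \<tau> in nhds 0. \<omega> L (x + \<tau> *s axis (js0 ! m) 1) = 0"
        using near[OF x, of "js0!m"]
      proof eventually_elim
        case (elim \<tau>)
        let ?x = "x + \<tau> *s axis (js0 ! m) 1"
        have "Pr ?x" using elim R(2) by blast
        then have "f ?x * \<omega> L ?x = 0" "f ?x \<noteq> 0" using elim LLS \<open>length L = p\<close> unfolding Pr_def by auto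
        then show ?case by simp
      qed
    qed
  qed
  have pdi: "pd i (\<omega> js0) (u + t *s axis i 1) =
      (0 * (t^k * poly Q t) - C y * G' t) / ((t^k * poly Q t) * (t^k * poly Q t))"
    if xb: "u + t *s axis i 1 \<in> ball 0 R" and Pt: "poly Pp t \<noteq> 0" for t
  proof -
    let ?xt = "u + t *s axis i 1"
    have Fx: "F ?xt \<noteq> 0" using FP Pt by simp
    have ev: "\<forall>\<^sub>F \<tau> in nhds 0. \<omega> js0 (?xt + \<tau> *s axis i 1) = C y / ((\<tau>+t)^k * poly Q (\<tau>+t))"
      using near[OF xb Fx, of i]
    proof eventually_elim
      case (elim \<tau>)
      let ?x = "?xt + \<tau> *s axis i 1"
      have eq: "?x = u + (\<tau>+t) *s axis i 1" by (simp add: algebra_simps vector_sadd_rdistrib)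
      have P: "Pr ?x" using elim R(2) by blast
      have Fx': "F ?x = (\<tau>+t)^k * poly Q (\<tau>+t)" unfolding eq FP PQ ..
      have "\<forall>j. w j = 0 \<longrightarrow> ?x $ j = u $ j" using wi by (auto simp: axis_def)
      then have "C ?x = C y" using Cinv Cu by metis
      moreover have "f ?x * \<omega> js0 ?x = \<eta> js0 ?x" "f ?x = F ?x" "\<eta> js0 ?x = C ?x"
        using P elim js0(1) unfolding Pr_def by auto
      ultimately show ?case using elim Fx' by (auto simp: field_simps)
    qed
    have "DERIV (\<lambda>s. s^k * poly Q s) (0 + t) :> G' t" using dG by simp
    then have d1: "DERIV (\<lambda>\<tau>. (\<tau>+t)^k * poly Q (\<tau>+t)) 0 :> G' t"
      using DERIV_shift[of "\<lambda>s. s^k * poly Q s" "G' t" 0 t] by simp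
    have gnz: "(0+t)^k * poly Q (0+t) \<noteq> 0" using Pt PQ by simp
    have d2: "DERIV (\<lambda>\<tau>. C y / ((\<tau>+t)^k * poly Q (\<tau>+t))) 0 :>
       (0 * ((0+t)^k * poly Q (0+t)) - C y * G' t) / (((0+t)^k * poly Q (0+t)) * ((0+t)^k * poly Q (0+t)))"
      by (rule DERIV_divide[OF DERIV_const d1 gnz])
    have "DERIV (\<lambda>\<tau>. \<omega> js0 (?xt + \<tau> *s axis i 1)) 0 :>
       (0 * ((0+t)^k * poly Q (0+t)) - C y * G' t) / (((0+t)^k * poly Q (0+t)) * ((0+t)^k * poly Q (0+t)))"
      using DERIV_cong_ev[OF refl ev refl] d2 by blast
    then show ?thesis unfolding pd_def by (simp add: DERIV_imp_deriv)
  qed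
  have ev_at: "\<forall>\<^sub>F t in at 0. \<theta> (i#js0) (u + t *s axis i 1) * t * poly Q t =
      - C y * (of_nat k * poly Q t + t * poly (pderiv Q) t)"
  proof -
    have "u + 0 *s axis i 1 \<in> ball 0 R" using uball by simp
    from ev_open_cont[OF cont_line open_ball this]
    have e1: "\<forall>\<^sub>F t in at 0. u + t *s axis i 1 \<in> ball 0 R" by (simp add: eventually_nhds_conv_at)
    have "poly Q 0 \<in> -{0}" using Q0 by simp
    from ev_open_cont[OF poly_isCont open_Compl[OF closed_singleton] this]
    have e2: "\<forall>\<^sub>F t in at 0. poly Q t \<noteq> 0" by (simp add: eventually_nhds_conv_at)
    have e3: "\<forall>\<^sub>F t in at 0. t \<noteq> (0::complex)" by (simp add: eventually_at_filter)
    show ?thesis using e1 e2 e3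
    proof eventually_elim
      case (elim t)
      let ?xt = "u + t *s axis i 1"
      let ?q = "poly Q t"
      have Pt: "poly Pp t \<noteq> 0" using PQ elim by simp
      have Fx: "F ?xt = t^k * ?q" using FP PQ by simp
      have P: "Pr ?xt" using elim R(2) by blast
      have fx: "f ?xt = t^k * ?q" using P Fx unfolding Pr_def by simp
      have fnz: "f ?xt \<noteq> 0" using fx elim by simp
      have th_eq: "\<theta> (i#js0) ?xt = f ?xt * ext_d \<omega> (i#js0) ?xt"
        using P fnz js0(1) unfolding Pr_def by auto
      have ext_eq: "ext_d \<omega> (i#js0) ?xt = pd i (\<omega> js0) ?xt"
      proof -
        have Fnz: "F ?xt \<noteq> 0" using Fx elim by simp
        show ?thesis using ext0[OF elim(1) Fnz] js0(1)
          unfolding ext_d_def by (simp add: sum.lessThan_Suc_shift del: sum.lessThan_Suc)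
      qed
      let ?th = "\<theta> (i#js0) ?xt"
      have key: "?th * (t^k * ?q) = - C y * G' t"
        using th_eq ext_eq pdi[OF elim(1) Pt] fx fnz elim(3) by (simp add: field_simps)
      obtain m where km: "k = Suc m" using k0 by (cases k) auto
      have "t^m * (?th * t * ?q) = ?th * (t^k * ?q)" by (simp add: km algebra_simps)
      also have "\<dots> = - C y * G' t" by (rule key)
      also have "\<dots> = t^m * (- C y * (of_nat k * ?q + t * poly (pderiv Q) t))"
        by (simp add: G'_def km algebra_simps)
      finally have X: "t^m * (?th * t * ?q) = t^m * (- C y * (of_nat k * ?q + t * poly (pderiv Q) t))" .
      have tm: "t^m \<noteq> 0" using elim(3) by simp
      show ?case using X mult_left_cancel[OF tm] by blast
    qed
  qed
  have c\<theta>: "isCont (\<theta> (i#js0)) (u + 0 *s axis i 1)" using R(2)[OF uball] unfolding Pr_def by simp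
  have c1: "isCont (\<lambda>t. \<theta> (i#js0) (u + t *s axis i 1)) 0" by (rule isCont_o2[OF cont_line c\<theta>])
  have "isCont (\<lambda>t. \<theta> (i#js0) (u + t *s axis i 1) * t * poly Q t) 0"
    using c1 by (intro continuous_intros) auto
  then have L1: "((\<lambda>t. \<theta> (i#js0) (u + t *s axis i 1) * t * poly Q t) \<longlongrightarrow> 0) (at 0)"
    unfolding isCont_def by simp
  have "isCont (\<lambda>t. - C y * (of_nat k * poly Q t + t * poly (pderiv Q) t)) 0"
    by (intro continuous_intros)
  then have L2: "((\<lambda>t. - C y * (of_nat k * poly Q t + t * poly (pderiv Q) t)) \<longlongrightarrow> - C y * (of_nat k * poly Q 0)) (at 0)"
    unfolding isCont_def by simp
  have L1': "((\<lambda>t. - C y * (of_nat k * poly Q t + t * poly (pderiv Q) t)) \<longlongrightarrow> 0) (at 0)"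
    using L1 tendsto_cong[OF ev_at] by blast
  have "- C y * (of_nat k * poly Q 0) = 0"
    using tendsto_unique[OF _ L2 L1'] by simp
  then show False using Cy k0 Q0 by simp
qed
end
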